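(* Let $G$ be a graph whose vertex set is partitioned into three cliques $A_1,A_2,A_3$ (equivalently, $G$ is the complement of a 3-partite graph with color classes $A_1,A_2,A_3$). If the vertex set of $G$ can be partitioned into triangles, then there is a partition of the vertex set of $G$ into triangles such that, for each $i\in\{1,2,3\}$, at most $14$ vertices of $A_i$ lie in triangles of the partition that are not entirely contained in $A_i$. *)

theory Defs
  imports Main
begin

definition simple_graph :: "'a set \<Rightarrow> ('a \<Rightarrow> 'a \<Rightarrow> bool) \<Rightarrow> bool" where
  "simple_graph V E \<longleftrightarrow> (\<forall>x y. E x y \<longrightarrow> x \<in> V \<and> y \<in> V) \<and>
     (\<forall>x y. E x y \<longrightarrow> E y x) \<and> (\<forall>x. \<not> E x x)"

definition is_clique :: "('a \<Rightarrow> 'a \<Rightarrow> bool) \<Rightarrow> 'a set \<Rightarrow> bool" where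
  "is_clique E C \<longleftrightarrow> (\<forall>x\<in>C. \<forall>y\<in>C. x \<noteq> y \<longrightarrow> E x y)"

definition is_triangle :: "'a set \<Rightarrow> ('a \<Rightarrow> 'a \<Rightarrow> bool) \<Rightarrow> 'a set \<Rightarrow> bool" where
  "is_triangle V E T \<longleftrightarrow> T \<subseteq> V \<and> card T = 3 \<and> is_clique E T"

definition triangle_partition :: "'a set \<Rightarrow> ('a \<Rightarrow> 'a \<Rightarrow> bool) \<Rightarrow> 'a set set \<Rightarrow> bool" where
  "triangle_partition V E P \<longleftrightarrow> (\<forall>T\<in>P. is_triangle V E T) \<and>
     (\<forall>S\<in>P. \<forall>T\<in>P. S \<noteq> T \<longrightarrow> S \<inter> T = {}) \<and> \<Union>P = V"

end

theory Submission
  imports Defs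
begin

definition mixed :: "'a set set \<Rightarrow> 'a set \<Rightarrow> bool" where
  "mixed As T \<longleftrightarrow> (\<forall>A\<in>As. \<not> T \<subseteq> A)"

definition notriple :: "'a set set \<Rightarrow> 'a set set \<Rightarrow> bool" where
  "notriple P As \<longleftrightarrow> (\<forall>T1\<in>P. \<forall>T2\<in>P. \<forall>T3\<in>P. \<not> (T1 \<noteq> T2 \<and> T1 \<noteq> T3 \<and> T2 \<noteq> T3
     \<and> mixed As T1 \<and> mixed As T2 \<and> mixed As T3
     \<and> (\<forall>A\<in>As. card (T1 \<inter> A) = card (T2 \<inter> A) \<and> card (T1 \<inter> A) = card (T3 \<inter> A))))"

lemma pure_split:
  "finite S \<Longrightarrow> 3 dvd card S \<Longrightarrow> \<exists>Q. (\<forall>T\<in>Q. T \<subseteq> S \<and> card T = 3) \<and>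
     (\<forall>X\<in>Q. \<forall>Y\<in>Q. X \<noteq> Y \<longrightarrow> X \<inter> Y = {}) \<and> \<Union>Q = S"
proof (induction "card S div 3" arbitrary: S)
  case 0
  then have "card S = 0" by auto
  then have "S = {}" using 0 by auto
  then show ?case by (intro exI[of _ "{}"]) auto
next
  case (Suc n)
  then have "card S \<ge> 3" by auto
  then obtain T where T: "T \<subseteq> S" "card T = 3" using obtain_subset_with_card_n by metis
  have fT: "finite T" using T Suc.prems finite_subset by auto
  have cS': "card (S - T) = card S - 3" using T fT by (simp add: card_Diff_subset)
  have "n = card (S - T) div 3" using Suc.hyps(2) cS' by auto
  moreover have "3 dvd card (S - T)" using cS' Suc.prems by auto
  ultimately obtain Q where Q: "\<forall>T\<in>Q. T \<subseteq> S - T' \<and> card T = 3" "\<forall>X\<in>Q. \<forall>Y\<in>Q. X \<noteq> Y \<longrightarrow> X \<inter> Y = {}" "\<Union>Q = S - T"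
    if "T' = T" for T'
    using Suc.hyps(1)[of "S - T"] Suc.prems by auto
  show ?case
  proof (intro exI[of _ "insert T Q"] conjI)
    show "\<forall>X\<in>insert T Q. X \<subseteq> S \<and> card X = 3" using Q[OF refl] T by auto
    show "\<forall>X\<in>insert T Q. \<forall>Y\<in>insert T Q. X \<noteq> Y \<longrightarrow> X \<inter> Y = {}" using Q[OF refl] by blast
    show "\<Union>(insert T Q) = S" using Q[OF refl] T by auto
  qed
qed


lemma tp_finite:
  assumes "finite V" "triangle_partition V E P"
  shows "finite P"
proof -
  have "P \<subseteq> Pow V" using assms(2) unfolding triangle_partition_def is_triangle_def by auto
  then show ?thesis using assms(1) finite_subset by blast
qed

lemma clique_sub: "is_clique E A \<Longrightarrow> X \<subseteq> A \<Longrightarrow> is_clique E X"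
  unfolding is_clique_def by blast

lemma disj_fam3:
  assumes s1: "\<forall>X\<in>Q1. X \<subseteq> A1" and s2: "\<forall>X\<in>Q2. X \<subseteq> A2" and s3: "\<forall>X\<in>Q3. X \<subseteq> A3"
    and d: "A1 \<inter> A2 = {}" "A1 \<inter> A3 = {}" "A2 \<inter> A3 = {}"
    and q1: "\<forall>X\<in>Q1. \<forall>Y\<in>Q1. X \<noteq> Y \<longrightarrow> X \<inter> Y = {}"
    and q2: "\<forall>X\<in>Q2. \<forall>Y\<in>Q2. X \<noteq> Y \<longrightarrow> X \<inter> Y = {}"
    and q3: "\<forall>X\<in>Q3. \<forall>Y\<in>Q3. X \<noteq> Y \<longrightarrow> X \<inter> Y = {}"
  shows "\<forall>X\<in>Q1 \<union> Q2 \<union> Q3. \<forall>Y\<in>Q1 \<union> Q2 \<union> Q3. X \<noteq> Y \<longrightarrow> X \<inter> Y = {}"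
proof (intro ballI impI)
  fix X Y assume X: "X \<in> Q1 \<union> Q2 \<union> Q3" and Y: "Y \<in> Q1 \<union> Q2 \<union> Q3" and ne: "X \<noteq> Y"
  have c: "X' \<inter> Y' = {}" if "X' \<subseteq> B" "Y' \<subseteq> C" "B \<inter> C = {}" for X' Y' B C :: "'a set"
    using that by blast
  from X consider (a1) "X \<in> Q1" | (a2) "X \<in> Q2" | (a3) "X \<in> Q3" by blast
  then show "X \<inter> Y = {}"
  proof cases
    case a1
    from Y consider "Y \<in> Q1" | "Y \<in> Q2" | "Y \<in> Q3" by blast
    then show ?thesis
    proof cases
      case 1 then show ?thesis using q1 a1 ne by blast
    next
      case 2 then show ?thesis using c[of X A1 Y A2] s1 s2 a1 d(1) by blast
    next
      case 3 then show ?thesis using c[of X A1 Y A3] s1 s3 a1 d(2) by blast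
    qed
  next
    case a2
    from Y consider "Y \<in> Q1" | "Y \<in> Q2" | "Y \<in> Q3" by blast
    then show ?thesis
    proof cases
      case 1 then show ?thesis using c[of X A2 Y A1] s1 s2 a2 d(1) by blast
    next
      case 2 then show ?thesis using q2 a2 ne by blast
    next
      case 3 then show ?thesis using c[of X A2 Y A3] s2 s3 a2 d(3) by blast
    qed
  next
    case a3
    from Y consider "Y \<in> Q1" | "Y \<in> Q2" | "Y \<in> Q3" by blast
    then show ?thesis
    proof cases
      case 1 then show ?thesis using c[of X A3 Y A1] s1 s3 a3 d(2) by blast
    next
      case 2 then show ?thesis using c[of X A3 Y A2] s2 s3 a3 d(3) by blast
    next
      case 3 then show ?thesis using q3 a3 ne by blast
    qed
  qed
qed

lemma exchange:
  assumes fV: "finite V" and V: "A1 \<union> A2 \<union> A3 = V"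
    and d: "A1 \<inter> A2 = {}" "A1 \<inter> A3 = {}" "A2 \<inter> A3 = {}"
    and cl: "is_clique E A1" "is_clique E A2" "is_clique E A3"
    and tp: "triangle_partition V E P"
    and T: "T1 \<in> P" "T2 \<in> P" "T3 \<in> P" "T1 \<noteq> T2" "T1 \<noteq> T3" "T2 \<noteq> T3"
    and mx: "mixed {A1,A2,A3} T1"
    and same: "\<forall>A\<in>{A1,A2,A3}. card (T1 \<inter> A) = card (T2 \<inter> A) \<and> card (T1 \<inter> A) = card (T3 \<inter> A)"
  shows "\<exists>P'. triangle_partition V E P' \<and>
     card {T\<in>P'. mixed {A1,A2,A3} T} < card {T\<in>P. mixed {A1,A2,A3} T}"
proof -
  define U where "U = T1 \<union> T2 \<union> T3"
  have tri: "\<And>X. X \<in> P \<Longrightarrow> X \<subseteq> V \<and> card X = 3"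
    using tp unfolding triangle_partition_def is_triangle_def by auto
  have disj: "\<And>X Y. X \<in> P \<Longrightarrow> Y \<in> P \<Longrightarrow> X \<noteq> Y \<Longrightarrow> X \<inter> Y = {}"
    using tp unfolding triangle_partition_def by auto
  have fin: "\<And>X. X \<in> P \<Longrightarrow> finite X" using tri fV finite_subset by blast
  have UV: "U \<subseteq> V" using tri T unfolding U_def by auto
  have split: "\<exists>Q. (\<forall>X\<in>Q. X \<subseteq> U \<inter> A \<and> card X = 3) \<and>
     (\<forall>X\<in>Q. \<forall>Y\<in>Q. X \<noteq> Y \<longrightarrow> X \<inter> Y = {}) \<and> \<Union>Q = U \<inter> A" if "A \<in> {A1,A2,A3}" for A
  proof -
    have "card (U \<inter> A) = card (T1 \<inter> A) + card (T2 \<inter> A) + card (T3 \<inter> A)"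
    proof -
      have "U \<inter> A = ((T1 \<inter> A) \<union> (T2 \<inter> A)) \<union> (T3 \<inter> A)" unfolding U_def by auto
      moreover have "card ((T1 \<inter> A) \<union> (T2 \<inter> A)) = card (T1 \<inter> A) + card (T2 \<inter> A)"
        by (rule card_Un_disjoint) (use fin T disj in auto)
      moreover have "card (((T1 \<inter> A) \<union> (T2 \<inter> A)) \<union> (T3 \<inter> A)) = card ((T1 \<inter> A) \<union> (T2 \<inter> A)) + card (T3 \<inter> A)"
        by (rule card_Un_disjoint) (use fin T disj in auto)
      ultimately show ?thesis by simp
    qed
    moreover have "card (T2 \<inter> A) = card (T1 \<inter> A)" "card (T3 \<inter> A) = card (T1 \<inter> A)"
      using same that by auto
    ultimately have "card (U \<inter> A) = 3 * card (T1 \<inter> A)" by simp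
    then have "3 dvd card (U \<inter> A)" by simp
    moreover have "finite (U \<inter> A)" using UV fV finite_subset by blast
    ultimately show ?thesis using pure_split by blast
  qed
  obtain Q1 where Q1: "\<forall>X\<in>Q1. X \<subseteq> U \<inter> A1 \<and> card X = 3" "\<forall>X\<in>Q1. \<forall>Y\<in>Q1. X \<noteq> Y \<longrightarrow> X \<inter> Y = {}" "\<Union>Q1 = U \<inter> A1"
    using split[of A1] by auto
  obtain Q2 where Q2: "\<forall>X\<in>Q2. X \<subseteq> U \<inter> A2 \<and> card X = 3" "\<forall>X\<in>Q2. \<forall>Y\<in>Q2. X \<noteq> Y \<longrightarrow> X \<inter> Y = {}" "\<Union>Q2 = U \<inter> A2"
    using split[of A2] by auto
  obtain Q3 where Q3: "\<forall>X\<in>Q3. X \<subseteq> U \<inter> A3 \<and> card X = 3" "\<forall>X\<in>Q3. \<forall>Y\<in>Q3. X \<noteq> Y \<longrightarrow> X \<inter> Y = {}" "\<Union>Q3 = U \<inter> A3"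
    using split[of A3] by auto
  define R where "R = P - {T1, T2, T3}"
  define Q where "Q = Q1 \<union> Q2 \<union> Q3"
  define P' where "P' = R \<union> Q"
  have RU: "X \<inter> U = {}" if X: "X \<in> R" for X
  proof -
    have XP: "X \<in> P" and n: "X \<noteq> T1" "X \<noteq> T2" "X \<noteq> T3" using X unfolding R_def by auto
    have "X \<inter> T1 = {}" by (rule disj[OF XP T(1) n(1)])
    moreover have "X \<inter> T2 = {}" by (rule disj[OF XP T(2) n(2)])
    moreover have "X \<inter> T3 = {}" by (rule disj[OF XP T(3) n(3)])
    ultimately show ?thesis unfolding U_def by (simp add: Int_Un_distrib)
  qed
  have Qin: "(Z \<in> Q1 \<and> Z \<subseteq> U \<inter> A1 \<and> card Z = 3) \<or> (Z \<in> Q2 \<and> Z \<subseteq> U \<inter> A2 \<and> card Z = 3) \<or> (Z \<in> Q3 \<and> Z \<subseteq> U \<inter> A3 \<and> card Z = 3)"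
    if "Z \<in> Q" for Z using that Q1(1) Q2(1) Q3(1) unfolding Q_def by auto
  have QU: "X \<subseteq> U" if "X \<in> Q" for X using Qin[OF that] by auto
  have Qdisj: "\<forall>X\<in>Q. \<forall>Y\<in>Q. X \<noteq> Y \<longrightarrow> X \<inter> Y = {}"
    unfolding Q_def
    by (rule disj_fam3[OF _ _ _ d Q1(2) Q2(2) Q3(2)]) (use Q1(1) Q2(1) Q3(1) in auto)
  have Qtri: "is_triangle V E X" if X: "X \<in> Q" for X
  proof -
    have "X \<subseteq> V" using QU[OF X] UV by blast
    moreover have "card X = 3" using Qin[OF X] by auto
    moreover have "is_clique E X"
      using Qin[OF X] clique_sub[OF cl(1)] clique_sub[OF cl(2)] clique_sub[OF cl(3)] by blast
    ultimately show ?thesis unfolding is_triangle_def by blast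
  qed
  have Qpure: "\<not> mixed {A1,A2,A3} X" if X: "X \<in> Q" for X
    using Qin[OF X] unfolding mixed_def by auto
  have RP: "R \<subseteq> P" unfolding R_def by auto
  have tp': "triangle_partition V E P'"
    unfolding triangle_partition_def
  proof (intro conjI)
    show "\<forall>T\<in>P'. is_triangle V E T"
    proof
      fix X assume "X \<in> P'"
      then show "is_triangle V E X" unfolding P'_def
      proof (elim UnE)
        assume "X \<in> R" then have "X \<in> P" using RP by blast
        then show ?thesis using tp unfolding triangle_partition_def by blast
      next
        assume "X \<in> Q" then show ?thesis by (rule Qtri)
      qed
    qed
    show "\<forall>S\<in>P'. \<forall>T\<in>P'. S \<noteq> T \<longrightarrow> S \<inter> T = {}"
    proof (intro ballI impI)
      fix S T assume S: "S \<in> P'" and T: "T \<in> P'" and ne: "S \<noteq> T"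
      from S T show "S \<inter> T = {}" unfolding P'_def
      proof (elim UnE)
        assume "S \<in> R" "T \<in> R" then show ?thesis using disj[of S T] RP ne by blast
      next
        assume a: "S \<in> R" "T \<in> Q" show ?thesis using RU[OF a(1)] QU[OF a(2)] by blast
      next
        assume a: "S \<in> Q" "T \<in> R" show ?thesis using RU[OF a(2)] QU[OF a(1)] by blast
      next
        assume "S \<in> Q" "T \<in> Q" then show ?thesis using Qdisj ne by blast
      qed
    qed
    have "\<Union>Q = U \<inter> A1 \<union> U \<inter> A2 \<union> U \<inter> A3" unfolding Q_def by (simp add: Q1(3) Q2(3) Q3(3))
    also have "\<dots> = U" using UV unfolding V[symmetric] by blast
    finally have "\<Union>Q = U" .
    moreover have "\<Union>R \<union> U = \<Union>P" unfolding R_def U_def using T(1-3) by blast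
    moreover have "\<Union>P = V" using tp unfolding triangle_partition_def by auto
    ultimately show "\<Union>P' = V" unfolding P'_def by auto
  qed
  have finM: "finite {T\<in>P. mixed {A1,A2,A3} T}" using tp_finite[OF fV tp] by auto
  have "{T\<in>P'. mixed {A1,A2,A3} T} \<subseteq> {T\<in>P. mixed {A1,A2,A3} T} - {T1}"
    unfolding P'_def R_def using Qpure by auto
  then have "card {T\<in>P'. mixed {A1,A2,A3} T} \<le> card ({T\<in>P. mixed {A1,A2,A3} T} - {T1})"
    using finM by (intro card_mono) auto
  also have "\<dots> < card {T\<in>P. mixed {A1,A2,A3} T}"
    using finM T mx by (intro card_Diff1_less) auto
  finally show ?thesis using tp' by blast
qed


lemma count14:
  assumes fV: "finite V" and V: "A1 \<union> A2 \<union> A3 = V"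
    and d: "A1 \<inter> A2 = {}" "A1 \<inter> A3 = {}" "A2 \<inter> A3 = {}"
    and tp: "triangle_partition V E P"
    and nt: "notriple P {A1,A2,A3}"
  shows "card {v \<in> A1. \<exists>T\<in>P. v \<in> T \<and> \<not> T \<subseteq> A1} \<le> 14"
proof -
  define K where "K a b c = {T\<in>P. mixed {A1,A2,A3} T \<and> card (T \<inter> A1) = a \<and> card (T \<inter> A2) = b \<and> card (T \<inter> A3) = c}" for a b c
  define W where "W a b c = (\<Union>T\<in>K a b c. T \<inter> A1)" for a b c
  have finP: "finite P" by (rule tp_finite[OF fV tp])
  have tri: "\<And>X. X \<in> P \<Longrightarrow> X \<subseteq> V \<and> card X = 3"
    using tp unfolding triangle_partition_def is_triangle_def by auto
  have finK: "finite (K a b c)" for a b c unfolding K_def using finP by auto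
  have Kle: "card (K a b c) \<le> 2" for a b c
  proof (rule ccontr)
    assume "\<not> card (K a b c) \<le> 2"
    then have "3 \<le> card (K a b c)" by simp
    then obtain S where S: "S \<subseteq> K a b c" "card S = 3" by (metis obtain_subset_with_card_n)
    then obtain x y z where xyz: "S = {x,y,z}" "x \<noteq> y" "y \<noteq> z" "x \<noteq> z" by (metis card_3_iff)
    have "x \<in> K a b c" "y \<in> K a b c" "z \<in> K a b c" using S xyz by auto
    then have kx: "x \<in> P" "mixed {A1,A2,A3} x" "card (x \<inter> A1) = a" "card (x \<inter> A2) = b" "card (x \<inter> A3) = c"
      and ky: "y \<in> P" "mixed {A1,A2,A3} y" "card (y \<inter> A1) = a" "card (y \<inter> A2) = b" "card (y \<inter> A3) = c"
      and kz: "z \<in> P" "mixed {A1,A2,A3} z" "card (z \<inter> A1) = a" "card (z \<inter> A2) = b" "card (z \<inter> A3) = c"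
      unfolding K_def by auto
    have "\<not> (x \<noteq> y \<and> x \<noteq> z \<and> y \<noteq> z \<and> mixed {A1,A2,A3} x \<and> mixed {A1,A2,A3} y \<and> mixed {A1,A2,A3} z
         \<and> (\<forall>A\<in>{A1,A2,A3}. card (x \<inter> A) = card (y \<inter> A) \<and> card (x \<inter> A) = card (z \<inter> A)))"
      using nt kx(1) ky(1) kz(1) unfolding notriple_def by blast
    then show False using kx ky kz xyz(2-4) by simp
  qed
  have Wle: "card (W a b c) \<le> 2 * a" for a b c
  proof -
    have "card (W a b c) \<le> (\<Sum>T\<in>K a b c. card (T \<inter> A1))"
      unfolding W_def by (rule card_UN_le[OF finK])
    also have "\<dots> = (\<Sum>T\<in>K a b c. a)" by (rule sum.cong) (auto simp: K_def)
    also have "\<dots> = card (K a b c) * a" by simp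
    also have "\<dots> \<le> 2 * a" using Kle[of a b c] by simp
    finally show ?thesis .
  qed
  have sub: "{v \<in> A1. \<exists>T\<in>P. v \<in> T \<and> \<not> T \<subseteq> A1} \<subseteq> W 1 2 0 \<union> W 1 0 2 \<union> W 1 1 1 \<union> W 2 1 0 \<union> W 2 0 1"
  proof
    fix v assume "v \<in> {v \<in> A1. \<exists>T\<in>P. v \<in> T \<and> \<not> T \<subseteq> A1}"
    then obtain T where v: "v \<in> A1" and T: "T \<in> P" "v \<in> T" "\<not> T \<subseteq> A1" by auto
    have TV: "T \<subseteq> V" and c3: "card T = 3" using tri[OF T(1)] by auto
    have finT: "finite T" using TV fV finite_subset by blast
    have TT: "T = ((T \<inter> A1) \<union> (T \<inter> A2)) \<union> (T \<inter> A3)" using TV V by blast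
    have "card (((T \<inter> A1) \<union> (T \<inter> A2)) \<union> (T \<inter> A3)) = card ((T \<inter> A1) \<union> (T \<inter> A2)) + card (T \<inter> A3)"
      by (rule card_Un_disjoint) (use finT d(2) d(3) in auto)
    then have "card T = card ((T \<inter> A1) \<union> (T \<inter> A2)) + card (T \<inter> A3)" using TT by simp
    also have "card ((T \<inter> A1) \<union> (T \<inter> A2)) = card (T \<inter> A1) + card (T \<inter> A2)"
      by (rule card_Un_disjoint) (use finT d(1) in auto)
    finally have sum3: "card (T \<inter> A1) + card (T \<inter> A2) + card (T \<inter> A3) = 3" using c3 by simp
    have ge1: "card (T \<inter> A1) \<ge> 1" using v T(2) finT 
    proof -
      have "T \<inter> A1 \<noteq> {}" using v T(2) by blast
      moreover have "finite (T \<inter> A1)" using finT by simp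
      ultimately show ?thesis by (simp add: Suc_le_eq card_gt_0_iff)
    qed
    have ne3: "card (T \<inter> A1) \<noteq> 3"
    proof
      assume "card (T \<inter> A1) = 3"
      then have "T \<inter> A1 = T" using card_subset_eq[OF finT, of "T \<inter> A1"] c3 by auto
      then show False using T(3) by blast
    qed
    have mx: "mixed {A1,A2,A3} T" unfolding mixed_def using T(3) v T(2) d by blast
    have cases5: "(card (T \<inter> A1) = 1 \<and> card (T \<inter> A2) = 2 \<and> card (T \<inter> A3) = 0) \<or>
          (card (T \<inter> A1) = 1 \<and> card (T \<inter> A2) = 0 \<and> card (T \<inter> A3) = 2) \<or>
          (card (T \<inter> A1) = 1 \<and> card (T \<inter> A2) = 1 \<and> card (T \<inter> A3) = 1) \<or>
          (card (T \<inter> A1) = 2 \<and> card (T \<inter> A2) = 1 \<and> card (T \<inter> A3) = 0) \<or>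
          (card (T \<inter> A1) = 2 \<and> card (T \<inter> A2) = 0 \<and> card (T \<inter> A3) = 1)"
      using sum3 ge1 ne3 by arith
    have TK: "T \<in> K (card (T \<inter> A1)) (card (T \<inter> A2)) (card (T \<inter> A3))"
      unfolding K_def using T(1) mx by simp
    have "v \<in> T \<inter> A1" using v T(2) by blast
    then have "v \<in> W (card (T \<inter> A1)) (card (T \<inter> A2)) (card (T \<inter> A3))"
      using TK unfolding W_def by blast
    then show "v \<in> W 1 2 0 \<union> W 1 0 2 \<union> W 1 1 1 \<union> W 2 1 0 \<union> W 2 0 1"
      using cases5 by (elim disjE) auto
  qed
  have "card {v \<in> A1. \<exists>T\<in>P. v \<in> T \<and> \<not> T \<subseteq> A1} \<le> card (W 1 2 0 \<union> W 1 0 2 \<union> W 1 1 1 \<union> W 2 1 0 \<union> W 2 0 1)"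
  proof (rule card_mono[OF _ sub])
    have "finite (W a b c)" for a b c
    proof -
      have finPT: "finite X" if "X \<in> P" for X using tri[OF that] fV finite_subset by blast
      show ?thesis unfolding W_def by (rule finite_UN_I[OF finK]) (auto simp: K_def dest: finPT)
    qed
    then show "finite (W 1 2 0 \<union> W 1 0 2 \<union> W 1 1 1 \<union> W 2 1 0 \<union> W 2 0 1)" by simp
  qed
  also have "\<dots> \<le> card (W 1 2 0) + card (W 1 0 2) + card (W 1 1 1) + card (W 2 1 0) + card (W 2 0 1)"
    using card_Un_le[of "W 1 2 0" "W 1 0 2"] card_Un_le[of "W 1 2 0 \<union> W 1 0 2" "W 1 1 1"]
      card_Un_le[of "W 1 2 0 \<union> W 1 0 2 \<union> W 1 1 1" "W 2 1 0"]
      card_Un_le[of "W 1 2 0 \<union> W 1 0 2 \<union> W 1 1 1 \<union> W 2 1 0" "W 2 0 1"] by linarith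
  also have "\<dots> \<le> 14" using Wle[of 1 2 0] Wle[of 1 0 2] Wle[of 1 1 1] Wle[of 2 1 0] Wle[of 2 0 1] by simp
  finally show ?thesis .
qed

theorem mainTheorem13:
  fixes V :: "'a set" and E :: "'a \<Rightarrow> 'a \<Rightarrow> bool" and A1 A2 A3 :: "'a set"
  assumes "finite V" and "simple_graph V E"
    and "A1 \<union> A2 \<union> A3 = V"
    and "A1 \<inter> A2 = {}" and "A1 \<inter> A3 = {}" and "A2 \<inter> A3 = {}"
    and "is_clique E A1" and "is_clique E A2" and "is_clique E A3"
    and "\<exists>P. triangle_partition V E P"
  shows "\<exists>P. triangle_partition V E P \<and>
    (\<forall>A\<in>{A1, A2, A3}. card {v \<in> A. \<exists>T\<in>P. v \<in> T \<and> \<not> T \<subseteq> A} \<le> 14)"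
proof -
  obtain P1 where "triangle_partition V E P1" using assms(10) by blast
  then obtain P where tp: "triangle_partition V E P"
    and mn: "\<forall>P'. triangle_partition V E P' \<longrightarrow> card {T\<in>P. mixed {A1,A2,A3} T} \<le> card {T\<in>P'. mixed {A1,A2,A3} T}"
    using ex_has_least_nat[of "\<lambda>P. triangle_partition V E P" P1 "\<lambda>P. card {T\<in>P. mixed {A1,A2,A3} T}"] by blast
  have nt: "notriple P {A1,A2,A3}"
    unfolding notriple_def
  proof (intro ballI notI)
    fix T1 T2 T3 assume T: "T1 \<in> P" "T2 \<in> P" "T3 \<in> P" and
      H: "T1 \<noteq> T2 \<and> T1 \<noteq> T3 \<and> T2 \<noteq> T3 \<and> mixed {A1,A2,A3} T1 \<and> mixed {A1,A2,A3} T2 \<and> mixed {A1,A2,A3} T3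
         \<and> (\<forall>A\<in>{A1,A2,A3}. card (T1 \<inter> A) = card (T2 \<inter> A) \<and> card (T1 \<inter> A) = card (T3 \<inter> A))"
    obtain P' where "triangle_partition V E P'" "card {T\<in>P'. mixed {A1,A2,A3} T} < card {T\<in>P. mixed {A1,A2,A3} T}"
      using exchange[OF assms(1) assms(3) assms(4) assms(5) assms(6) assms(7) assms(8) assms(9) tp T] H by blast
    then show False using mn by (meson not_le)
  qed
  have s1: "{A2,A1,A3} = {A1,A2,A3}" and s2: "{A3,A1,A2} = {A1,A2,A3}" by auto
  have "card {v \<in> A1. \<exists>T\<in>P. v \<in> T \<and> \<not> T \<subseteq> A1} \<le> 14"
    by (rule count14[OF assms(1) assms(3) assms(4) assms(5) assms(6) tp nt])
  moreover have "card {v \<in> A2. \<exists>T\<in>P. v \<in> T \<and> \<not> T \<subseteq> A2} \<le> 14"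
    by (rule count14[of V A2 A1 A3 E P]) (use assms(1,3-6) tp nt s1 in auto)
  moreover have "card {v \<in> A3. \<exists>T\<in>P. v \<in> T \<and> \<not> T \<subseteq> A3} \<le> 14"
    by (rule count14[of V A3 A1 A2 E P]) (use assms(1,3-6) tp nt s2 in auto)
  ultimately show ?thesis using tp by auto
qed

end
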